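(* Let $\alpha\in(0,1]$, $0\le a<b$, and let $f:[a,b]\to\mathbb{R}$ be $\alpha$-fractional differentiable with $D_\alpha f$ continuous and $m\le D_\alpha f(t)\le M$ for $t\in[a,b]$. Then $$ \left|\frac{f(b)+f(a)}{2}-\frac{\alpha}{b^\alpha-a^\alpha}\int_a^b f(s)\,d_\alpha s\right|\le\frac14\left(\frac{b^\alpha-a^\alpha}{\alpha}\right)(M-m). $$
   Context: The conformable $\alpha$-fractional derivative is $D_\alpha f(t):=\lim_{\varepsilon\to 0}\frac{f(t+\varepsilon t^{1-\alpha})-f(t)}{\varepsilon}$ for $t>0$, $D_\alpha f(0):=\lim_{t\to0^+}D_\alpha f(t)$. Integrals: $\int_a^b h(s)\,d_\alpha s:=\int_a^b h(s)s^{\alpha-1}\,ds$.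
   Formalization: f is also assumed continuous on [a,b], so in the case a = 0 also at the point 0. The statement above fails without it. *)

theory Defs
  imports "HOL-Analysis.Analysis"
begin

definition conf_has_deriv :: "real \<Rightarrow> (real \<Rightarrow> real) \<Rightarrow> real \<Rightarrow> real set \<Rightarrow> real \<Rightarrow> bool" where
  "conf_has_deriv \<alpha> f L S t \<longleftrightarrow>
     ((\<lambda>e. (f (t + e * t powr (1 - \<alpha>)) - f t) / e) \<longlongrightarrow> L)
       (at 0 within {e. t + e * t powr (1 - \<alpha>) \<in> S})"

definition conf_integral :: "real \<Rightarrow> real \<Rightarrow> real \<Rightarrow> (real \<Rightarrow> real) \<Rightarrow> real" where
  "conf_integral \<alpha> a b h = integral {a..b} (\<lambda>s. h s * s powr (\<alpha> - 1))"

end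

theory Submission imports Defs begin

lemma cont_powr0:
  fixes a b \<alpha> :: real assumes "0 \<le> a" "0 < \<alpha>"
  shows "continuous_on {a..b} (\<lambda>x. x powr \<alpha>)"
  unfolding continuous_on_def
proof (intro ballI)
  fix y assume y: "y \<in> {a..b}"
  have ev: "eventually (\<lambda>x. x \<ge> 0) (at y within {a..b})"
    using assms(1) by (auto simp: eventually_at_filter)
  show "((\<lambda>x. x powr \<alpha>) \<longlongrightarrow> y powr \<alpha>) (at y within {a..b})"
    by (rule tendsto_powr') (use ev assms in auto)
qed

lemma conf_deriv_imp:
  fixes \<alpha> a b t L :: real and f :: "real \<Rightarrow> real"
  assumes "0 \<le> a" "a < t" "t < b" "conf_has_deriv \<alpha> f L {a..b} t"
  shows "(f has_real_derivative L * t powr (\<alpha> - 1)) (at t)"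
proof -
  define c where "c = t powr (1 - \<alpha>)"
  have c: "c > 0" using assms unfolding c_def by simp
  have set: "{e. t + e * c \<in> {a..b}} = {(a-t)/c..(b-t)/c}"
    using c by (auto simp: field_simps)
  have int: "0 \<in> interior {(a-t)/c..(b-t)/c}"
    using c assms by (auto simp: field_simps)
  have lim: "((\<lambda>e. (f (t + e * c) - f t) / e) \<longlongrightarrow> L) (at 0)"
    using assms(4) unfolding conf_has_deriv_def c_def[symmetric] set
    using at_within_interior[OF int] by simp
  have fl: "filterlim (\<lambda>h. h / c) (at 0) (at 0)"
  proof -
    have "((\<lambda>h. h / c) \<longlongrightarrow> 0 / c) (at 0)" by (intro tendsto_intros) (use c in auto)
    moreover have "eventually (\<lambda>h. h / c \<noteq> 0) (at (0::real))"
      using c by (auto simp: eventually_at_filter)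
    ultimately show ?thesis by (simp add: filterlim_at)
  qed
  have lim2: "((\<lambda>h. (f (t + h / c * c) - f t) / (h / c)) \<longlongrightarrow> L) (at 0)"
    using filterlim_compose[OF lim fl] by simp
  have lim3: "((\<lambda>h. (f (t + h) - f t) / h) \<longlongrightarrow> L / c) (at 0)"
  proof -
    have "((\<lambda>h. (f (t + h / c * c) - f t) / (h / c) / c) \<longlongrightarrow> L / c) (at 0)"
      by (intro tendsto_intros lim2) (use c in auto)
    moreover have "(\<lambda>h. (f (t + h / c * c) - f t) / (h / c) / c) = (\<lambda>h. (f (t + h) - f t) / h)"
      proof (rule ext) fix h show "(f (t + h / c * c) - f t) / (h / c) / c = (f (t + h) - f t) / h" using c by (cases "h = 0") (simp_all add: field_simps) qed
    ultimately show ?thesis by simp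
  qed
  have "L / c = L * t powr (\<alpha> - 1)"
    using assms c unfolding c_def by (simp add: powr_diff powr_minus divide_simps)
  then show ?thesis using lim3 by (simp add: DERIV_def)
qed

theorem mainTheorem19:
  fixes \<alpha> a b m M :: real and f Df :: "real \<Rightarrow> real"
  assumes "0 < \<alpha>" "\<alpha> \<le> 1" "0 \<le> a" "a < b"
    and "continuous_on {a..b} f"
    and "\<And>t. t \<in> {a..b} \<Longrightarrow> 0 < t \<Longrightarrow> conf_has_deriv \<alpha> f (Df t) {a..b} t"
    and "continuous_on {a..b} Df"
    and "\<And>t. t \<in> {a..b} \<Longrightarrow> m \<le> Df t \<and> Df t \<le> M"
  shows "\<bar>(f b + f a) / 2 - \<alpha> / (b powr \<alpha> - a powr \<alpha>) * conf_integral \<alpha> a b f\<bar>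
           \<le> 1 / 4 * ((b powr \<alpha> - a powr \<alpha>) / \<alpha>) * (M - m)"
proof -
  define \<phi> where "\<phi> s = s powr \<alpha> / \<alpha>" for s
  define d where "d s = s powr (\<alpha> - 1)" for s
  define A where "A = \<phi> a"
  define B where "B = \<phi> b"
  define mid where "mid = (A + B) / 2"
  define c where "c = (M + m) / 2"
  define K where "K s = (\<phi> s - mid) * (Df s - c) * d s" for s
  define G where "G s = (\<phi> s - mid) * f s - c * (\<phi> s - mid)^2 / 2" for s
  have AB: "A < B" unfolding A_def B_def \<phi>_def using assms
    by (simp add: divide_strict_right_mono powr_less_mono2)
  have phimono: "A \<le> \<phi> s \<and> \<phi> s \<le> B" if "s \<in> {a..b}" for s
    using that assms unfolding A_def B_def \<phi>_def
    by (auto intro!: divide_right_mono powr_mono2)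
  have mM: "m \<le> M" using assms(8)[of a] assms(4) by fastforce
  have cphi: "continuous_on {a..b} \<phi>"
    unfolding \<phi>_def by (intro continuous_intros cont_powr0) (use assms in auto)
  have dphi: "(\<phi> has_real_derivative d x) (at x)" if "x \<in> {a<..<b}" for x
  proof -
    have "x > 0" using that assms by auto
    then have "((\<lambda>z. z powr \<alpha>) has_real_derivative \<alpha> * x powr (\<alpha> - 1)) (at x)"
      by (rule has_real_derivative_powr)
    then have "((\<lambda>z. z powr \<alpha> / \<alpha>) has_real_derivative \<alpha> * x powr (\<alpha> - 1) / \<alpha>) (at x)"
      by (rule DERIV_cdivide)
    then show ?thesis using assms unfolding \<phi>_def d_def by simp
  qed
  have df: "(f has_real_derivative Df x * d x) (at x)" if "x \<in> {a<..<b}" for x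
    unfolding d_def using that assms by (intro conf_deriv_imp assms(6)) auto
  have d_int: "(d has_integral B - A) {a..b}"
    unfolding A_def B_def
    by (rule fundamental_theorem_of_calculus_interior)
       (use assms cphi dphi in \<open>auto simp: has_real_derivative_iff_has_vector_derivative[symmetric]\<close>)
  have G_int: "((\<lambda>s. f s * d s + K s) has_integral G b - G a) {a..b}"
  proof (rule fundamental_theorem_of_calculus_interior)
    show "a \<le> b" using assms by simp
    show "continuous_on {a..b} G" unfolding G_def
      by (intro continuous_intros cphi assms(5)) auto
    fix x assume x: "x \<in> {a<..<b}"
    have "(G has_real_derivative
        d x * f x + (\<phi> x - mid) * (Df x * d x) - c * (2 * (\<phi> x - mid) * d x) / 2) (at x)"
      unfolding G_def
      by (rule derivative_eq_intros dphi[OF x] df[OF x] refl | simp)+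
    moreover have "d x * f x + (\<phi> x - mid) * (Df x * d x) - c * (2 * (\<phi> x - mid) * d x) / 2
       = f x * d x + K x" unfolding K_def by (simp add: field_simps)
    ultimately have "(G has_real_derivative f x * d x + K x) (at x)" by metis
    then show "(G has_vector_derivative f x * d x + K x) (at x)"
      by (metis has_real_derivative_iff_has_vector_derivative)
  qed
  have Gba: "G b - G a = (B - A) / 2 * (f b + f a)"
    unfolding G_def A_def[symmetric] B_def[symmetric] mid_def by (simp add: field_simps power2_eq_square)
  define C where "C = (B - A) * (M - m) / 4"
  have Kbound: "norm (K s) \<le> C * d s" if "s \<in> {a..b}" for s
  proof -
    have "\<bar>\<phi> s - mid\<bar> \<le> (B - A) / 2" using phimono[OF that] unfolding mid_def by (auto simp only: abs_le_iff) (simp_all add: field_simps)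
    moreover have "\<bar>Df s - c\<bar> \<le> (M - m) / 2" using assms(8)[OF that] unfolding c_def by (auto simp only: abs_le_iff) (simp_all add: field_simps)
    moreover have ds: "d s \<ge> 0" unfolding d_def by simp
    ultimately have "\<bar>\<phi> s - mid\<bar> * \<bar>Df s - c\<bar> * d s \<le> (B - A) / 2 * ((M - m) / 2) * d s"
      using AB by (intro mult_right_mono mult_mono) auto
    then show ?thesis unfolding K_def C_def using ds by (simp add: abs_mult)
  qed
  have Cd_int: "((\<lambda>s. C * d s) has_integral C * (B - A)) {a..b}"
    using has_integral_mult_right[OF d_int] by simp
  have K_intbl: "K integrable_on {a..b}"
  proof -
    have "K integrable_on {a<..<b}"
    proof (rule measurable_bounded_by_integrable_imp_integrable)
      show "K \<in> borel_measurable (lebesgue_on {a<..<b})"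
      proof (rule continuous_imp_measurable_on_sets_lebesgue)
        have "continuous_on {a<..<b} d" unfolding d_def
          by (intro continuous_intros) (use assms in auto)
        moreover have "continuous_on {a<..<b} \<phi>" by (rule continuous_on_subset[OF cphi]) auto
        moreover have "continuous_on {a<..<b} Df" by (rule continuous_on_subset[OF assms(7)]) auto
        ultimately show "continuous_on {a<..<b} K" unfolding K_def by (intro continuous_intros)
      qed auto
      show "(\<lambda>s. C * d s) integrable_on {a<..<b}"
        using has_integral_integrable[OF Cd_int] integrable_on_open_interval[of "\<lambda>s. C * d s" a b] by (simp add: cbox_interval)
      show "\<And>x. x \<in> {a<..<b} \<Longrightarrow> norm (K x) \<le> C * d x" using Kbound by auto
    qed auto
    then show ?thesis using integrable_on_open_interval[of K a b] by (simp add: cbox_interval)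
  qed
  have IK: "\<bar>integral {a..b} K\<bar> \<le> C * (B - A)"
    using integral_norm_bound_integral[OF K_intbl has_integral_integrable[OF Cd_int] Kbound]
      integral_unique[OF d_int] by simp
  have fd: "((\<lambda>s. f s * d s) has_integral (B - A) / 2 * (f b + f a) - integral {a..b} K) {a..b}"
    using has_integral_diff[OF G_int integrable_integral[OF K_intbl]] Gba by simp
  have CI: "conf_integral \<alpha> a b f = (B - A) / 2 * (f b + f a) - integral {a..b} K"
    unfolding conf_integral_def using integral_unique[OF fd] unfolding d_def by simp
  have BA: "B - A = (b powr \<alpha> - a powr \<alpha>) / \<alpha>"
    unfolding A_def B_def \<phi>_def by (simp add: diff_divide_distrib)
  have e: "\<alpha> / (b powr \<alpha> - a powr \<alpha>) = 1 / (B - A)" using BA assms by simp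
  then have "(f b + f a) / 2 - \<alpha> / (b powr \<alpha> - a powr \<alpha>) * conf_integral \<alpha> a b f
      = integral {a..b} K / (B - A)" using AB unfolding CI e by (simp add: field_simps)
  then have "\<bar>(f b + f a) / 2 - \<alpha> / (b powr \<alpha> - a powr \<alpha>) * conf_integral \<alpha> a b f\<bar>
      = \<bar>integral {a..b} K\<bar> / (B - A)" using AB by simp
  also have "\<dots> \<le> C * (B - A) / (B - A)" using IK AB by (intro divide_right_mono) auto
  also have "\<dots> = 1 / 4 * ((b powr \<alpha> - a powr \<alpha>) / \<alpha>) * (M - m)"
    using AB unfolding C_def BA[symmetric] by (simp add: field_simps)
  finally show ?thesis .
qed
end
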